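(* Let $p_1,\dots,p_n\ge0$, unit vectors $\vec a_1,\dots,\vec a_n\in\mathbb{R}^3$ with $\sum_ip_i=2$, $\sum_ip_i\vec a_i=\vec0$, and let $A^{1/2}_i=\frac{p_i}{2}\big(\mathds{1}+\tfrac12\vec a_i\cdot\vec\sigma\big)$. Let $f(\vec x)=\sum_ip_i\Theta(\vec x\cdot\vec a_i)$ and suppose (in the given coordinates) $f(\vec v_{s_xs_ys_z})\le1$ for all $(s_x,s_y,s_z)\in\{\pm1\}^3$. Define $$\alpha_i=\frac{p_i}{2}\Big(1-\frac14\sum_{s_x,s_y,s_z=\pm1}\Theta(\vec a_i\cdot\vec v_{s_xs_ys_z})\Big),$$ and for $\vec\lambda\in S_2$ with $s_k=\mathrm{sgn}(\lambda_k)$, $$p(i|\vec\lambda)=p_i\,\Theta(\vec a_i\cdot\vec v_{s_xs_ys_z})+\frac{(1-f(\vec v_{s_xs_ys_z}))\,\alpha_i}{\sum_j\alpha_j}$$ (with the second term taken to be $0$ if $\sum_j\alpha_j=0$). Then $\alpha_i\ge0$ for all $i$, $p(i|\vec\lambda)\ge0$, $\sum_ip(i|\vec\lambda)=1$ for all $\vec\lambda$, and $$\int_{S_2}p(i|\vec\lambda)\,\frac{1}{4\pi}(\mathds{1}+\vec\lambda\cdot\vec\sigma)\,\mathrm{d}\vec\lambda=A^{1/2}_i\quad\text{for all } i.$$ Moreover, $\sum_{s_x,s_y,s_z=\pm1}p_i\,\Theta(\vec a_i\cdot\vec v_{s_xs_ys_z})\,G_{s_xs_ys_z}=A^{1/2}_i-\alpha_i\mathds{1}$,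 where $G_{s_xs_ys_z}=\frac{\mathds{1}}{8}+\frac{\vec v_{s_xs_ys_z}\cdot\vec\sigma}{16}$.
   Context: $\Theta(x)=x$ for $x\ge0$ and $0$ for $x<0$; $\mathrm{sgn}(x)=+1$ if $x\ge0$ and $-1$ if $x<0$; $\vec v_{s_xs_ys_z}=(s_x,s_y,s_z)^T$; $\vec\sigma$ the Pauli vector; $S_2$ the unit sphere in $\mathbb{R}^3$ with surface measure $\mathrm{d}\vec\lambda$ of total mass $4\pi$. *)

theory Defs
  imports "HOL-Analysis.Analysis"
begin

definition Theta :: "real \<Rightarrow> real" where
  "Theta x = (if x \<ge> 0 then x else 0)"

text \<open>sgn with the convention sgn(0) = +1.\<close>
definition sgnp :: "real \<Rightarrow> real" where
  "sgnp x = (if x \<ge> 0 then 1 else -1)"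

definition vs :: "real \<Rightarrow> real \<Rightarrow> real \<Rightarrow> real^3" where
  "vs sx sy sz = vector [sx, sy, sz]"

definition sgnvec :: "real^3 \<Rightarrow> real^3" where
  "sgnvec l = vs (sgnp (l$1)) (sgnp (l$2)) (sgnp (l$3))"

definition pauli_x :: "complex^2^2" where
  "pauli_x = vector [vector [0, 1], vector [1, 0]]"
definition pauli_y :: "complex^2^2" where
  "pauli_y = vector [vector [0, -\<i>], vector [\<i>, 0]]"
definition pauli_z :: "complex^2^2" where
  "pauli_z = vector [vector [1, 0], vector [0, -1]]"

definition pauli_dot :: "real^3 \<Rightarrow> complex^2^2" where
  "pauli_dot x = (x$1) *\<^sub>R pauli_x + (x$2) *\<^sub>R pauli_y + (x$3) *\<^sub>R pauli_z"

definition id2 :: "complex^2^2" where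
  "id2 = mat 1"

text \<open>Surface measure on the unit sphere S_2 in R^3 (total mass 4 pi), realised as the
  cone measure: 3 times the push-forward of Lebesgue measure on the punctured unit ball
  under radial projection x \<mapsto> x/|x|.\<close>
definition S2_measure :: "(real^3) measure" where
  "S2_measure = density (distr (restrict_space lborel (ball 0 1 - {0})) borel
                           (\<lambda>x. x /\<^sub>R norm x)) (\<lambda>_. 3)"

definition sum_signs :: "(real \<Rightarrow> real \<Rightarrow> real \<Rightarrow> 'b::comm_monoid_add) \<Rightarrow> 'b" where
  "sum_signs g = (\<Sum>sx\<in>{-1,1::real}. \<Sum>sy\<in>{-1,1::real}. \<Sum>sz\<in>{-1,1::real}. g sx sy sz)"

definition f_fun :: "nat \<Rightarrow> (nat \<Rightarrow> real) \<Rightarrow> (nat \<Rightarrow> real^3) \<Rightarrow> real^3 \<Rightarrow> real" where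
  "f_fun n p a x = (\<Sum>i<n. p i * Theta (x \<bullet> a i))"

definition alpha :: "(nat \<Rightarrow> real) \<Rightarrow> (nat \<Rightarrow> real^3) \<Rightarrow> nat \<Rightarrow> real" where
  "alpha p a i = p i / 2 * (1 - 1/4 * sum_signs (\<lambda>sx sy sz. Theta (a i \<bullet> vs sx sy sz)))"

definition pcond :: "nat \<Rightarrow> (nat \<Rightarrow> real) \<Rightarrow> (nat \<Rightarrow> real^3) \<Rightarrow> nat \<Rightarrow> real^3 \<Rightarrow> real" where
  "pcond n p a i l =
     (let v = sgnvec l; S = (\<Sum>j<n. alpha p a j) in
      p i * Theta (a i \<bullet> v) + (if S = 0 then 0 else (1 - f_fun n p a v) * alpha p a i / S))"

definition A_half :: "(nat \<Rightarrow> real) \<Rightarrow> (nat \<Rightarrow> real^3) \<Rightarrow> nat \<Rightarrow> complex^2^2" where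
  "A_half p a i = (p i / 2) *\<^sub>R (id2 + (1/2) *\<^sub>R pauli_dot (a i))"

definition G :: "real \<Rightarrow> real \<Rightarrow> real \<Rightarrow> complex^2^2" where
  "G sx sy sz = (1/8) *\<^sub>R id2 + (1/16) *\<^sub>R pauli_dot (vs sx sy sz)"

end

theory Submission
  imports Defs
begin


lemma B3: "(Basis :: (real^3) set) = {axis 1 1, axis 2 1, axis 3 1}"
  by (auto simp: Basis_vec_def UNIV_3)

definition refl3 :: "real \<Rightarrow> real \<Rightarrow> real \<Rightarrow> real^3 \<Rightarrow> real^3" where
  "refl3 a b c x = (\<chi> i. (if i = 1 then a else if i = 2 then b else c) * x$i)"

lemma refl3_comp [simp]: "refl3 a b c x $ 1 = a * x$1" "refl3 a b c x $ 2 = b * x$2" "refl3 a b c x $ 3 = c * x$3"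
  by (simp_all add: refl3_def)

lemma refl3_meas [measurable]: "refl3 a b c \<in> borel_measurable borel"
  unfolding refl3_def by (intro borel_measurable_continuous_onI continuous_on_vec_lambda continuous_intros)

lemma nn_integral_refl3:
  assumes a: "a \<in> {-1,1}" and b: "b \<in> {-1,1}" and c: "c \<in> {-1,1}"
    and f[measurable]: "f \<in> borel_measurable borel"
  shows "(\<integral>\<^sup>+x. f x \<partial>lborel) = (\<integral>\<^sup>+x. f (refl3 a b c x) \<partial>lborel)"
proof -
  define cc where "cc j = (if j = axis 1 1 then a else if j = axis 2 1 then b else c)" for j :: "real^3"
  have ne: "(axis 1 1::real^3) \<noteq> axis 2 1" "(axis 1 1::real^3) \<noteq> axis 3 1" "(axis 2 1::real^3) \<noteq> axis 3 1"
    by (auto simp: axis_eq_axis)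
  have T: "(\<lambda>x. 0 + (\<Sum>j\<in>Basis. (cc j * (x \<bullet> j)) *\<^sub>R j)) = refl3 a b c"
  proof
    fix x :: "real^3"
    have k: "(\<Sum>j\<in>Basis. (cc j * (x \<bullet> j)) *\<^sub>R j) $ k = cc (axis k 1) * x $ k" for k
    proof -
      have "(\<Sum>j\<in>Basis. (cc j * (x \<bullet> j)) *\<^sub>R j) $ k = (\<Sum>j\<in>Basis. (cc j * (x \<bullet> j)) *\<^sub>R j) \<bullet> axis k 1"
        by (rule cart_eq_inner_axis)
      also have "\<dots> = cc (axis k 1) * (x \<bullet> axis k 1)"
        by (rule inner_sum_left_Basis) (auto simp: Basis_vec_def)
      finally show ?thesis by (simp add: cart_eq_inner_axis)
    qed
    show "0 + (\<Sum>j\<in>Basis. (cc j * (x \<bullet> j)) *\<^sub>R j) = refl3 a b c x"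
      unfolding add_0_left vec_eq_iff forall_3 k using ne by (simp add: cc_def refl3_def)
  qed
  have cnz: "\<And>j. j \<in> Basis \<Longrightarrow> cc j \<noteq> 0" using a b c by (auto simp: cc_def)
  have P: "(\<Prod>j\<in>Basis. \<bar>cc j\<bar>) = 1"
    using a b c ne by (auto simp: B3 cc_def)
  have "lborel = density (distr lborel borel (refl3 a b c)) (\<lambda>_. 1)"
    using lborel_affine_euclidean[of cc 0, OF cnz] unfolding T P by simp
  hence "(\<integral>\<^sup>+x. f x \<partial>lborel) = (\<integral>\<^sup>+x. f x \<partial>density (distr lborel borel (refl3 a b c)) (\<lambda>_. 1))"
    by simp
  also have "\<dots> = (\<integral>\<^sup>+x. f (refl3 a b c x) \<partial>lborel)"
    by (simp add: density_1 nn_integral_distr)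
  finally show ?thesis .
qed



lemma AE_nonzero_comps: "AE x in lborel. (x::real^3)$1 \<noteq> 0 \<and> x$2 \<noteq> 0 \<and> x$3 \<noteq> 0"
proof -
  have hp: "{x::real^3. x$k = 0} \<in> null_sets lborel" for k
  proof -
    have "negligible {x::real^3. x \<bullet> axis k 1 = 0}"
      by (rule negligible_standard_hyperplane) (auto simp: Basis_vec_def)
    moreover have "{x::real^3. x \<bullet> axis k 1 = 0} = {x::real^3. x$k = 0}"
      by (auto simp: cart_eq_inner_axis)
    moreover have "{x::real^3. x$k = 0} \<in> sets borel" by measurable
    ultimately show ?thesis
      by (auto simp: null_sets_completion_iff negligible_iff_null_sets)
  qed
  have "AE x in lborel. x \<notin> {x::real^3. x$1 = 0} \<union> {x. x$2 = 0} \<union> {x. x$3 = 0}"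
    by (rule AE_not_in) (intro null_sets.Un hp)
  thus ?thesis by auto
qed

lemma AE_not_sphere: "AE x in lborel. (x::real^3) \<notin> sphere 0 1"
proof -
  from negligible_sphere[of "0::real^3" 1] have "sphere (0::real^3) 1 \<in> null_sets lborel"
    by (auto simp: null_sets_completion_iff negligible_iff_null_sets negligible_convex_frontier)
  thus ?thesis by (rule AE_not_in)
qed

definition oct :: "real \<Rightarrow> real \<Rightarrow> real \<Rightarrow> (real^3) set" where
  "oct a b c = {x. sgnp (x$1) = a \<and> sgnp (x$2) = b \<and> sgnp (x$3) = c}"

lemma sgnp_meas[measurable]: "sgnp \<in> borel_measurable borel"
  unfolding sgnp_def by measurable

lemma oct_sets[measurable]: "oct a b c \<in> sets borel"
  unfolding oct_def by measurable

lemma cball_sets[measurable]: "cball (0::real^3) r \<in> sets borel"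
  by simp

lemma sgnp_mult: "s \<in> {-1,1} \<Longrightarrow> y \<noteq> 0 \<Longrightarrow> sgnp (s * y) = s * sgnp y"
  by (auto simp: sgnp_def)

lemma sgnp_flip: "s \<in> {-1,1} \<Longrightarrow> s' \<in> {-1,1} \<Longrightarrow> y \<noteq> 0 \<Longrightarrow> (sgnp (s * s' * y) = s) = (sgnp y = s')"
  by (auto simp: sgnp_def zero_le_mult_iff)

lemma norm_refl3: "a \<in> {-1,1} \<Longrightarrow> b \<in> {-1,1} \<Longrightarrow> c \<in> {-1,1} \<Longrightarrow> norm (refl3 a b c x) = norm x"
  unfolding norm_vec_def L2_set_def by (auto simp: sum_3 power_mult_distrib)

lemma oct_sym:
  assumes s: "a \<in> {-1,1}" "b \<in> {-1,1}" "c \<in> {-1,1}" "a' \<in> {-1,1}" "b' \<in> {-1,1}" "c' \<in> {-1,1}"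
    and w[measurable]: "w \<in> borel_measurable borel"
    and winv: "\<And>x. w (refl3 (a*a') (b*b') (c*c') x) = w x"
  shows "(\<integral>\<^sup>+x. indicator (cball 0 1) x * indicator (oct a b c) x * w x \<partial>lborel)
       = (\<integral>\<^sup>+x. indicator (cball 0 1) x * indicator (oct a' b' c') x * w x \<partial>lborel)"
proof -
  have s2: "a*a' \<in> {-1,1}" "b*b' \<in> {-1,1}" "c*c' \<in> {-1,1}" using s by auto
  have "(\<integral>\<^sup>+x. indicator (cball 0 1) x * indicator (oct a b c) x * w x \<partial>lborel)
     = (\<integral>\<^sup>+x. indicator (cball 0 1) (refl3 (a*a') (b*b') (c*c') x) * indicator (oct a b c) (refl3 (a*a') (b*b') (c*c') x) * w (refl3 (a*a') (b*b') (c*c') x) \<partial>lborel)"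
    by (rule nn_integral_refl3[OF s2]) measurable
  also have "\<dots> = (\<integral>\<^sup>+x. indicator (cball 0 1) x * indicator (oct a' b' c') x * w x \<partial>lborel)"
  proof (rule nn_integral_cong_AE)
    show "AE x in lborel. indicator (cball 0 1) (refl3 (a*a') (b*b') (c*c') x) * indicator (oct a b c) (refl3 (a*a') (b*b') (c*c') x) * w (refl3 (a*a') (b*b') (c*c') x)
       = indicator (cball 0 1) x * indicator (oct a' b' c') x * w x"
      using AE_nonzero_comps
    proof eventually_elim
      case (elim x)
      have o: "refl3 (a*a') (b*b') (c*c') x \<in> oct a b c \<longleftrightarrow> x \<in> oct a' b' c'"
        using elim s by (simp add: oct_def sgnp_flip)
      show ?case using o by (simp add: winv norm_refl3[OF s2] indicator_def)
    qed
  qed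
  finally show ?thesis .
qed



lemma sum_pm1: "(\<Sum>s\<in>{-1,1::real}. f s) = f (-1) + f 1"
  by simp

lemma oct_partition: "(\<Sum>a\<in>{-1,1::real}. \<Sum>b\<in>{-1,1::real}. \<Sum>c\<in>{-1,1::real}. indicator (oct a b c) x :: ennreal) = 1"
  unfolding sum_pm1 by (simp add: oct_def sgnp_def indicator_def)

lemma oct_avg:
  assumes s: "a \<in> {-1,1}" "b \<in> {-1,1}" "c \<in> {-1,1}"
    and w[measurable]: "w \<in> borel_measurable borel"
    and winv: "\<And>x s1 s2 s3. s1 \<in> {-1,1} \<Longrightarrow> s2 \<in> {-1,1} \<Longrightarrow> s3 \<in> {-1,1} \<Longrightarrow> w (refl3 s1 s2 s3 x) = w x"
  shows "8 * (\<integral>\<^sup>+x. indicator (cball 0 1) x * indicator (oct a b c) x * w x \<partial>lborel)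
       = (\<integral>\<^sup>+x. indicator (cball 0 1) x * w x \<partial>lborel)"
proof -
  let ?N = "\<lambda>a b c. (\<integral>\<^sup>+x. indicator (cball 0 1) x * indicator (oct a b c) x * w x \<partial>lborel)"
  have eq: "?N a' b' c' = ?N a b c" if "a' \<in> {-1,1}" "b' \<in> {-1,1}" "c' \<in> {-1,1}" for a' b' c'
    by (rule oct_sym) (use s that in \<open>auto intro!: winv\<close>)
  have "(\<integral>\<^sup>+x. indicator (cball 0 1) x * w x \<partial>lborel)
      = (\<integral>\<^sup>+x. (\<Sum>a\<in>{-1,1::real}. \<Sum>b\<in>{-1,1::real}. \<Sum>c\<in>{-1,1::real}. indicator (cball 0 1) x * indicator (oct a b c) x * w x) \<partial>lborel)"
  proof (rule nn_integral_cong)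
    fix x :: "real^3"
    have "indicator (cball 0 1) x * w x = indicator (cball 0 1) x * (\<Sum>a\<in>{-1,1::real}. \<Sum>b\<in>{-1,1::real}. \<Sum>c\<in>{-1,1::real}. indicator (oct a b c) x :: ennreal) * w x"
      by (simp only: oct_partition mult_1_right)
    also have "\<dots> = (\<Sum>a\<in>{-1,1::real}. \<Sum>b\<in>{-1,1::real}. \<Sum>c\<in>{-1,1::real}. indicator (cball 0 1) x * indicator (oct a b c) x * w x)"
      by (simp add: distrib_left distrib_right)
    finally show "indicator (cball 0 1) x * w x = \<dots>" .
  qed
  also have "\<dots> = (\<Sum>a\<in>{-1,1::real}. \<Sum>b\<in>{-1,1::real}. \<Sum>c\<in>{-1,1::real}. ?N a b c)"
    apply (subst nn_integral_sum, simp, measurable)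
    apply (rule sum.cong, rule refl)
    apply (subst nn_integral_sum, simp, measurable)
    apply (rule sum.cong, rule refl)
    apply (subst nn_integral_sum, simp, measurable)
    done
  also have "\<dots> = (\<Sum>a'\<in>{-1,1::real}. \<Sum>b'\<in>{-1,1::real}. \<Sum>c'\<in>{-1,1::real}. ?N a b c)"
    by (intro sum.cong refl eq) auto
  also have "\<dots> = 8 * ?N a b c" by simp
  finally show ?thesis by simp
qed



lemma scale_cball:
  assumes g[measurable]: "g \<in> borel_measurable borel"
    and hom: "\<And>c x. c > 0 \<Longrightarrow> g (c *\<^sub>R x) = g x" and t: "t > 0"
  shows "(\<integral>\<^sup>+x. indicator (cball (0::real^3) t) x * g x \<partial>lborel)
       = ennreal (t^3) * (\<integral>\<^sup>+x. indicator (cball 0 1) x * g x \<partial>lborel)"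
proof -
  have "(\<integral>\<^sup>+x. indicator (cball (0::real^3) t) x * g x \<partial>lborel)
     = (\<integral>\<^sup>+x. indicator (cball (0::real^3) t) x * g x \<partial>density (distr lborel borel (\<lambda>x. 0 + t *\<^sub>R x)) (\<lambda>_. \<bar>t\<bar>^DIM(real^3)))"
    using lborel_affine[of t "0::real^3"] t by simp
  also have "\<dots> = (\<integral>\<^sup>+x. ennreal (t^3) * (indicator (cball (0::real^3) t) (t *\<^sub>R x) * g (t *\<^sub>R x)) \<partial>lborel)"
    using t by (simp add: nn_integral_density nn_integral_distr)
  also have "\<dots> = (\<integral>\<^sup>+x. ennreal (t^3) * (indicator (cball (0::real^3) 1) x * g x) \<partial>lborel)"
  proof (rule nn_integral_cong)
    fix x :: "real^3"
    have "t *\<^sub>R x \<in> cball 0 t \<longleftrightarrow> x \<in> cball 0 1" using t by (simp add: mem_cball_0)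
    thus "ennreal (t^3) * (indicator (cball (0::real^3) t) (t *\<^sub>R x) * g (t *\<^sub>R x)) = ennreal (t^3) * (indicator (cball (0::real^3) 1) x * g x)"
      using t by (simp add: hom indicator_def)
  qed
  also have "\<dots> = ennreal (t^3) * (\<integral>\<^sup>+x. indicator (cball 0 1) x * g x \<partial>lborel)"
    by (rule nn_integral_cmult) measurable
  finally show ?thesis .
qed



lemma layer_cake:
  assumes g[measurable]: "g \<in> borel_measurable borel"
    and hom: "\<And>c x. c > 0 \<Longrightarrow> g (c *\<^sub>R x) = g x"
    and P: "(\<integral>\<^sup>+x. indicator (cball (0::real^3) 1) x * g x \<partial>lborel) = ennreal p" and p: "p \<ge> 0"
  shows "(\<integral>\<^sup>+x. indicator (cball (0::real^3) 1) x * ennreal (norm x) * g x \<partial>lborel) = ennreal (3/4 * p)"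
proof -
  have [measurable]: "g \<in> borel_measurable lborel" by simp
  have [measurable]: "\<And>r. indicator (cball (0::real^3) r) \<in> borel_measurable lborel" by simp
  have [measurable]: "\<And>t. Measurable.pred borel (\<lambda>x::real^3. t \<in> {0..<norm x})"
    by (simp add: atLeastLessThan_iff) measurable
  have "(\<integral>\<^sup>+x. indicator (cball (0::real^3) 1) x * ennreal (norm x) * g x \<partial>lborel)
      = (\<integral>\<^sup>+x. \<integral>\<^sup>+t. indicator {0..<norm x} t * indicator (cball (0::real^3) 1) x * g x \<partial>lborel \<partial>lborel)"
  proof (rule nn_integral_cong)
    fix x :: "real^3"
    have "(\<integral>\<^sup>+t. indicator {0..<norm x} t * indicator (cball (0::real^3) 1) x * g x \<partial>lborel)
        = (\<integral>\<^sup>+t. indicator {0..<norm x} t \<partial>lborel) * (indicator (cball (0::real^3) 1) x * g x)"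
      by (subst nn_integral_multc[symmetric]) (auto simp: mult.assoc)
    also have "\<dots> = ennreal (norm x) * (indicator (cball (0::real^3) 1) x * g x)"
      by simp
    finally show "indicator (cball (0::real^3) 1) x * ennreal (norm x) * g x = (\<integral>\<^sup>+t. indicator {0..<norm x} t * indicator (cball (0::real^3) 1) x * g x \<partial>lborel)"
      by (simp add: mult_ac)
  qed
  also have "\<dots> = (\<integral>\<^sup>+t. \<integral>\<^sup>+x. indicator {0..<norm x} t * indicator (cball (0::real^3) 1) x * g x \<partial>lborel \<partial>lborel)"
  proof (rule lborel_pair.Fubini'[symmetric])
    have [measurable]: "Measurable.pred (borel \<Otimes>\<^sub>M borel) (\<lambda>x::((real^3)\<times>real). snd x \<in> {0..<norm (fst x)})"
      by (simp add: atLeastLessThan_iff) measurable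
    show "(\<lambda>(x, y). indicator {0..<norm x} y * indicator (cball (0::real^3) 1) x * g x) \<in> borel_measurable (lborel \<Otimes>\<^sub>M lborel)"
      by measurable
  qed
  also have "\<dots> = (\<integral>\<^sup>+t. ennreal (indicator {0..1} t * ((1 - t^3) * p)) \<partial>lborel)"
  proof (rule nn_integral_cong_AE)
    have "AE t in lborel. t \<noteq> 0" by (rule AE_lborel_singleton)
    thus "AE t in lborel. (\<integral>\<^sup>+x. indicator {0..<norm x} t * indicator (cball (0::real^3) 1) x * g x \<partial>lborel) = ennreal (indicator {0..1} t * ((1 - t^3) * p))"
    proof eventually_elim
      case (elim t)
      show ?case
      proof (cases "t < 0 \<or> t \<ge> 1")
        case True
        hence z: "(\<lambda>x::real^3. indicator {0..<norm x} t * indicator (cball (0::real^3) 1) x * g x) = (\<lambda>_. 0)"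
          by (auto simp: indicator_def mem_cball_0 intro!: ext)
        moreover have "indicator {0..1} t * ((1 - t^3) * p) = 0"
          using True by (auto simp: indicator_def)
        ultimately show ?thesis by (simp only: z) simp
      next
        case False
        with elim have t: "0 < t" "t < 1" by auto
        define Q where "Q = (\<integral>\<^sup>+x. indicator {0..<norm x} t * indicator (cball (0::real^3) 1) x * g x \<partial>lborel)"
        have "Q + ennreal (t^3 * p) = Q + ennreal (t^3) * ennreal p"
          using t p by (simp add: ennreal_mult)
        also have "\<dots> = Q + (\<integral>\<^sup>+x. indicator (cball (0::real^3) t) x * g x \<partial>lborel)"
          using scale_cball[OF g hom t(1)] P by simp
        also have "\<dots> = (\<integral>\<^sup>+x. indicator {0..<norm x} t * indicator (cball (0::real^3) 1) x * g x + indicator (cball (0::real^3) t) x * g x \<partial>lborel)"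
          unfolding Q_def by (rule nn_integral_add[symmetric]) measurable
        also have "\<dots> = (\<integral>\<^sup>+x. indicator (cball (0::real^3) 1) x * g x \<partial>lborel)"
          using t by (intro nn_integral_cong) (auto simp: indicator_def mem_cball_0)
        finally have eq: "Q + ennreal (t^3 * p) = ennreal p" using P by simp
        have "Q = Q + ennreal (t^3 * p) - ennreal (t^3 * p)"
          by simp
        also have "\<dots> = ennreal ((1 - t^3) * p)"
          unfolding eq using t p by (subst ennreal_minus) (auto simp: algebra_simps)
        finally show ?thesis using t unfolding Q_def by (simp add: indicator_def)
      qed
    qed
  qed
  also have "\<dots> = (\<integral>\<^sup>+t\<in>{0..1}. ennreal ((1 - t^3) * p) \<partial>lborel)"
    by (intro nn_integral_cong) (auto simp: indicator_def)
  also have "\<dots> = ennreal ((p * 1 - p * 1^4/4) - (p * 0 - p * 0^4/4))"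
  proof (rule nn_integral_FTC_Icc)
    fix t :: real assume "t \<in> {0..1}"
    show "((\<lambda>t. p * t - p * t^4/4) has_real_derivative (1 - t^3) * p) (at t)"
      by (auto intro!: derivative_eq_intros simp: algebra_simps)
    show "0 \<le> (1 - t^3) * p" using \<open>t \<in> {0..1}\<close> p by (auto intro!: mult_nonneg_nonneg simp: power_le_one)
  qed auto
  also have "\<dots> = ennreal (3/4 * p)" by simp
  finally show ?thesis .
qed



lemma one_dim_integral: "(\<integral>\<^sup>+y. indicator {-1..1} y * ennreal (\<bar>y\<bar> * (pi * (1 - y^2))) \<partial>lborel) = ennreal (pi/2)"
proof -
  have [measurable]: "(\<lambda>y::real. ennreal (\<bar>y\<bar> * (pi * (1 - y^2)))) \<in> borel_measurable borel" by measurable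
  have half: "(\<integral>\<^sup>+y. indicator {0..1} y * ennreal (\<bar>y\<bar> * (pi * (1 - y^2))) \<partial>lborel) = ennreal (pi/4)"
  proof -
    have "(\<integral>\<^sup>+y. indicator {0..1} y * ennreal (\<bar>y\<bar> * (pi * (1 - y^2))) \<partial>lborel)
        = (\<integral>\<^sup>+y\<in>{0..1}. ennreal (y * (pi * (1 - y^2))) \<partial>lborel)"
      by (intro nn_integral_cong) (auto simp: indicator_def)
    also have "\<dots> = ennreal ((pi * (1^2/2) - pi * (1^4/4)) - (pi * (0^2/2) - pi * (0^4/4)))"
    proof (rule nn_integral_FTC_Icc)
      fix t :: real assume "t \<in> {0..1}"
      show "((\<lambda>t. pi * (t^2/2) - pi * (t^4/4)) has_real_derivative (t * (pi * (1 - t^2)))) (at t)"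
        by (auto intro!: derivative_eq_intros simp: algebra_simps power2_eq_square power3_eq_cube)
      show "0 \<le> t * (pi * (1 - t^2))" using \<open>t \<in> {0..1}\<close> by (auto intro!: mult_nonneg_nonneg simp: power_le_one abs_le_square_iff)
    qed auto
    also have "\<dots> = ennreal (pi/4)" by simp
    finally show ?thesis .
  qed
  have neg: "(\<integral>\<^sup>+y. indicator {-1..0} y * ennreal (\<bar>y\<bar> * (pi * (1 - y^2))) \<partial>lborel)
      = (\<integral>\<^sup>+y. indicator {0..1} y * ennreal (\<bar>y\<bar> * (pi * (1 - y^2))) \<partial>lborel)"
    by (subst nn_integral_real_affine[of _ "-1" 0]) (auto simp: indicator_def intro!: nn_integral_cong)
  have "(\<integral>\<^sup>+y. indicator {-1..1} y * ennreal (\<bar>y\<bar> * (pi * (1 - y^2))) \<partial>lborel)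
      = (\<integral>\<^sup>+y. indicator {-1..0} y * ennreal (\<bar>y\<bar> * (pi * (1 - y^2))) + indicator {0..1} y * ennreal (\<bar>y\<bar> * (pi * (1 - y^2))) \<partial>lborel)"
    by (intro nn_integral_cong_AE AE_I[of _ _ "{0}"]) (auto simp: indicator_def)
  also have "\<dots> = ennreal (pi/4) + ennreal (pi/4)"
    by (subst nn_integral_add) (auto simp: neg half)
  also have "\<dots> = ennreal (pi/2)" by (simp flip: ennreal_plus)
  finally show ?thesis .
qed



lemma abs_comp_integral:
  "(\<integral>\<^sup>+x. indicator (cball (0::real^3) 1) x * ennreal \<bar>x$k\<bar> \<partial>lborel) = ennreal (pi/2)"
proof -
  interpret product_sigma_finite "\<lambda>_. lborel" by standard
  define i0 :: "real^3" where "i0 = axis k 1"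
  define A where "A = Basis - {i0}"
  have i0: "i0 \<in> Basis" by (auto simp: i0_def Basis_vec_def)
  have BA: "(Basis :: (real^3) set) = insert i0 A" "i0 \<notin> A" "finite A" using i0 by (auto simp: A_def)
  have cA: "card A = 2" using i0 by (simp add: A_def card_Diff_singleton_if)
  define G where "G f = indicator {f. sqrt (\<Sum>j\<in>Basis. (f j)\<^sup>2) \<le> 1} f * ennreal \<bar>f i0\<bar>" for f :: "real^3 \<Rightarrow> real"
  have Gm[measurable]: "G \<in> borel_measurable (Pi\<^sub>M (insert i0 A) (\<lambda>_. lborel))"
    unfolding G_def BA(1)[symmetric] apply measurable by (rule i0)
  have "(\<integral>\<^sup>+x. indicator (cball (0::real^3) 1) x * ennreal \<bar>x$k\<bar> \<partial>lborel)
      = (\<integral>\<^sup>+x. indicator (cball (0::real^3) 1) x * ennreal \<bar>x$k\<bar> \<partial>distr (Pi\<^sub>M Basis (\<lambda>_. lborel)) borel (\<lambda>f. \<Sum>b\<in>Basis. f b *\<^sub>R b))"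
    by (subst lborel_eq) (rule refl)
  also have "\<dots> = (\<integral>\<^sup>+f. indicator (cball (0::real^3) 1) (\<Sum>b\<in>Basis. f b *\<^sub>R b) * ennreal \<bar>(\<Sum>b\<in>Basis. f b *\<^sub>R b) $ k\<bar> \<partial>Pi\<^sub>M Basis (\<lambda>_. lborel))"
    by (rule nn_integral_distr) measurable
  also have "\<dots> = (\<integral>\<^sup>+f. G f \<partial>Pi\<^sub>M Basis (\<lambda>_. lborel))"
  proof (rule nn_integral_cong)
      fix f :: "real^3 \<Rightarrow> real"
      have c: "(\<Sum>b\<in>Basis. f b *\<^sub>R b) $ k = f i0"
        unfolding cart_eq_inner_axis i0_def[symmetric] using i0 by (rule inner_sum_left_Basis)
      have n: "norm (\<Sum>b\<in>Basis. f b *\<^sub>R b :: real^3) = sqrt (\<Sum>j\<in>Basis. (f j)\<^sup>2)"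
        using euclidean_dist_l2[of 0 "\<Sum>b\<in>Basis. f b *\<^sub>R b :: real^3"]
        by (simp add: L2_set_def inner_sum_left_Basis)
      show "indicator (cball (0::real^3) 1) (\<Sum>b\<in>Basis. f b *\<^sub>R b) * ennreal \<bar>(\<Sum>b\<in>Basis. f b *\<^sub>R b) $ k\<bar> = G f"
        unfolding G_def c by (simp add: mem_cball_0 n indicator_def)
    qed
  also have "\<dots> = (\<integral>\<^sup>+y. \<integral>\<^sup>+x. G (x(i0 := y)) \<partial>Pi\<^sub>M A (\<lambda>_. lborel) \<partial>lborel)"
    unfolding BA(1) by (rule product_nn_integral_insert_rev[OF BA(3) BA(2) Gm])
  also have "\<dots> = (\<integral>\<^sup>+y. ennreal \<bar>y\<bar> * indicator {-1..1} y *
       emeasure (Pi\<^sub>M A (\<lambda>_. lborel)) ({f. sqrt (\<Sum>j\<in>A. (f j)\<^sup>2) \<le> sqrt (1 - y\<^sup>2)} \<inter> space (Pi\<^sub>M A (\<lambda>_. lborel))) \<partial>lborel)"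
  proof (rule nn_integral_cong)
    fix y :: real
    have "(\<integral>\<^sup>+x. G (x(i0 := y)) \<partial>Pi\<^sub>M A (\<lambda>_. lborel))
        = (\<integral>\<^sup>+x. (ennreal \<bar>y\<bar> * indicator {-1..1} y) * indicator ({f. sqrt (\<Sum>j\<in>A. (f j)\<^sup>2) \<le> sqrt (1 - y\<^sup>2)} \<inter> space (Pi\<^sub>M A (\<lambda>_. lborel))) x \<partial>Pi\<^sub>M A (\<lambda>_. lborel))"
    proof (rule nn_integral_cong)
      fix x :: "real^3 \<Rightarrow> real" assume x: "x \<in> space (Pi\<^sub>M A (\<lambda>_. lborel))"
      have s: "(\<Sum>j\<in>Basis. ((x(i0 := y)) j)\<^sup>2) = y\<^sup>2 + (\<Sum>j\<in>A. (x j)\<^sup>2)"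
        unfolding BA(1) using BA(2,3) by (simp add: sum.insert) (intro sum.cong, auto)
      have S0: "(\<Sum>j\<in>A. (x j)\<^sup>2) \<ge> 0" by (simp add: sum_nonneg)
      have eq: "sqrt (y\<^sup>2 + (\<Sum>j\<in>A. (x j)\<^sup>2)) \<le> 1 \<longleftrightarrow> y \<in> {-1..1} \<and> sqrt (\<Sum>j\<in>A. (x j)\<^sup>2) \<le> sqrt (1 - y\<^sup>2)"
      proof
        assume h: "sqrt (y\<^sup>2 + (\<Sum>j\<in>A. (x j)\<^sup>2)) \<le> 1"
        hence h2: "y\<^sup>2 + (\<Sum>j\<in>A. (x j)\<^sup>2) \<le> 1" by (simp add: real_sqrt_le_1_iff)
        hence "y\<^sup>2 \<le> 1" using S0 by linarith
        hence "y \<in> {-1..1}" by (auto simp: abs_square_le_1 abs_le_iff)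
        thus "y \<in> {-1..1} \<and> sqrt (\<Sum>j\<in>A. (x j)\<^sup>2) \<le> sqrt (1 - y\<^sup>2)" using h2 by auto
      next
        assume h: "y \<in> {-1..1} \<and> sqrt (\<Sum>j\<in>A. (x j)\<^sup>2) \<le> sqrt (1 - y\<^sup>2)"
        hence "(\<Sum>j\<in>A. (x j)\<^sup>2) \<le> 1 - y\<^sup>2" by simp
        thus "sqrt (y\<^sup>2 + (\<Sum>j\<in>A. (x j)\<^sup>2)) \<le> 1" by simp
      qed
      show "G (x(i0 := y)) = (ennreal \<bar>y\<bar> * indicator {-1..1} y) * indicator ({f. sqrt (\<Sum>j\<in>A. (f j)\<^sup>2) \<le> sqrt (1 - y\<^sup>2)} \<inter> space (Pi\<^sub>M A (\<lambda>_. lborel))) x"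
      proof -
        have "G (x(i0 := y)) = (if sqrt (y\<^sup>2 + (\<Sum>j\<in>A. (x j)\<^sup>2)) \<le> 1 then 1 else 0) * ennreal \<bar>y\<bar>"
          unfolding G_def indicator_def by (simp only: mem_Collect_eq s fun_upd_same of_bool_def)
        then show ?thesis using eq x by (auto simp: indicator_def)
      qed
    qed
    also have "\<dots> = ennreal \<bar>y\<bar> * indicator {-1..1} y * emeasure (Pi\<^sub>M A (\<lambda>_. lborel)) ({f. sqrt (\<Sum>j\<in>A. (f j)\<^sup>2) \<le> sqrt (1 - y\<^sup>2)} \<inter> space (Pi\<^sub>M A (\<lambda>_. lborel)))"
      using BA(3) by (subst nn_integral_cmult) auto
    finally show "(\<integral>\<^sup>+x. G (x(i0 := y)) \<partial>Pi\<^sub>M A (\<lambda>_. lborel)) = \<dots>" .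
  qed
  also have "\<dots> = (\<integral>\<^sup>+y. indicator {-1..1} y * ennreal (\<bar>y\<bar> * (pi * (1 - y^2))) \<partial>lborel)"
  proof (rule nn_integral_cong_AE)
    have "AE y in lborel. y \<notin> {-1,1}"
      by (intro AE_not_in countable_imp_null_set_lborel) auto
    thus "AE y in lborel. ennreal \<bar>y\<bar> * indicator {-1..1} y * emeasure (Pi\<^sub>M A (\<lambda>_. lborel)) ({f. sqrt (\<Sum>j\<in>A. (f j)\<^sup>2) \<le> sqrt (1 - y\<^sup>2)} \<inter> space (Pi\<^sub>M A (\<lambda>_. lborel)))
        = indicator {-1..1} y * ennreal (\<bar>y\<bar> * (pi * (1 - y^2)))"
    proof eventually_elim
      case (elim y)
      show ?case
      proof (cases "y \<in> {-1<..<1}")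
        case True
        hence "y\<^sup>2 < 1" by (auto simp: abs_square_less_1)
        hence "emeasure (Pi\<^sub>M A (\<lambda>_. lborel)) ({f. sqrt (\<Sum>j\<in>A. (f j)\<^sup>2) \<le> sqrt (1 - y\<^sup>2)} \<inter> space (Pi\<^sub>M A (\<lambda>_. lborel)))
            = ennreal (unit_ball_vol (real (card A)) * sqrt (1 - y\<^sup>2) ^ card A)"
          using BA(3) by (intro emeasure_cball_aux) auto
        also have "\<dots> = ennreal (pi * (1 - y^2))"
          using \<open>y\<^sup>2 < 1\<close> by (simp add: cA eval_unit_ball_vol)
        finally show ?thesis using True
          by (simp add: indicator_def ennreal_mult' abs_mult)
      qed (use elim in \<open>auto simp: indicator_def\<close>)
    qed
  qed
  also have "\<dots> = ennreal (pi/2)" by (rule one_dim_integral)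
  finally show ?thesis .
qed



lemma cball_vol: "(\<integral>\<^sup>+x. indicator (cball (0::real^3) 1) x \<partial>lborel) = ennreal (4/3*pi)"
  using emeasure_cball[of 1 "0::real^3"] by (simp add: unit_ball_vol_3)

lemma ratio_integral:
  "(\<integral>\<^sup>+x. indicator (cball (0::real^3) 1) x * ennreal (\<bar>x$k\<bar> / norm x) \<partial>lborel) = ennreal (2/3*pi)"
proof -
  let ?g = "\<lambda>x::real^3. ennreal (\<bar>x$k\<bar> / norm x)"
  have [measurable]: "?g \<in> borel_measurable borel" by measurable
  have hom: "?g (c *\<^sub>R x) = ?g x" if "c > 0" for c x
    using that by (simp add: abs_mult)
  have "(\<integral>\<^sup>+x. indicator (cball (0::real^3) 1) x * ?g x \<partial>lborel) \<le> (\<integral>\<^sup>+x. indicator (cball (0::real^3) 1) x \<partial>lborel)"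
  proof (rule nn_integral_mono)
    fix x :: "real^3"
    have "\<bar>x$k\<bar> / norm x \<le> 1"
      using component_le_norm_cart[of x k] by (cases "norm x = 0") (auto simp: divide_le_eq_1)
    thus "indicator (cball (0::real^3) 1) x * ?g x \<le> indicator (cball (0::real^3) 1) x"
      by (auto simp: indicator_def ennreal_le_1)
  qed
  also have "\<dots> < top" by (simp add: cball_vol)
  finally have fin: "(\<integral>\<^sup>+x. indicator (cball (0::real^3) 1) x * ?g x \<partial>lborel) \<noteq> top" by simp
  define p where "p = enn2real (\<integral>\<^sup>+x. indicator (cball (0::real^3) 1) x * ?g x \<partial>lborel)"
  have P: "(\<integral>\<^sup>+x. indicator (cball (0::real^3) 1) x * ?g x \<partial>lborel) = ennreal p"
    using fin by (simp add: p_def ennreal_enn2real_if)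
  have p0: "p \<ge> 0" by (simp add: p_def)
  have "ennreal (3/4*p) = (\<integral>\<^sup>+x. indicator (cball (0::real^3) 1) x * ennreal (norm x) * ?g x \<partial>lborel)"
    by (rule layer_cake[OF _ hom P p0, symmetric]) measurable
  also have "\<dots> = (\<integral>\<^sup>+x. indicator (cball (0::real^3) 1) x * ennreal \<bar>x$k\<bar> \<partial>lborel)"
  proof (rule nn_integral_cong)
    fix x :: "real^3"
    have "norm x * (\<bar>x$k\<bar> / norm x) = \<bar>x$k\<bar>"
      by (cases "x = 0") auto
    thus "indicator (cball (0::real^3) 1) x * ennreal (norm x) * ?g x = indicator (cball (0::real^3) 1) x * ennreal \<bar>x$k\<bar>"
      by (simp add: mult.assoc ennreal_mult'[symmetric])
  qed
  also have "\<dots> = ennreal (pi/2)" by (rule abs_comp_integral)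
  finally have "3/4*p = pi/2" using p0 by (subst (asm) ennreal_inj) auto
  hence "p = 2/3*pi" by simp
  hence pv: "p = 2/3*pi" by simp
  show ?thesis by (simp only: P pv)
qed

lemma refl3_sgn: "s1 \<in> {-1,1} \<Longrightarrow> s2 \<in> {-1,1} \<Longrightarrow> s3 \<in> {-1,1} \<Longrightarrow> \<bar>refl3 s1 s2 s3 x $ k\<bar> = \<bar>x $ k\<bar>"
  using exhaust_3[of k] by (auto simp: abs_mult)

lemma N1: assumes "a \<in> {-1,1}" "b \<in> {-1,1}" "c \<in> {-1,1}"
  shows "(\<integral>\<^sup>+x. indicator (cball (0::real^3) 1) x * indicator (oct a b c) x \<partial>lborel) = ennreal (pi/6)"
proof -
  have "8 * (\<integral>\<^sup>+x. indicator (cball (0::real^3) 1) x * indicator (oct a b c) x * (\<lambda>_. 1) x \<partial>lborel)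
       = (\<integral>\<^sup>+x. indicator (cball (0::real^3) 1) x * (\<lambda>_. 1) x \<partial>lborel)"
    by (rule oct_avg[OF assms, where w="\<lambda>_. 1"]) simp_all
  also have "\<dots> = 8 * ennreal (pi/6)"
    by (simp add: cball_vol flip: ennreal_numeral ennreal_mult)
  finally show ?thesis by (simp add: ennreal_mult_cancel_left)
qed

lemma N2: assumes "a \<in> {-1,1}" "b \<in> {-1,1}" "c \<in> {-1,1}"
  shows "(\<integral>\<^sup>+x. indicator (cball (0::real^3) 1) x * indicator (oct a b c) x * ennreal (\<bar>x$k\<bar> / norm x) \<partial>lborel) = ennreal (pi/12)"
proof -
  have "8 * (\<integral>\<^sup>+x. indicator (cball (0::real^3) 1) x * indicator (oct a b c) x * ennreal (\<bar>x$k\<bar> / norm x) \<partial>lborel)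
       = (\<integral>\<^sup>+x. indicator (cball (0::real^3) 1) x * ennreal (\<bar>x$k\<bar> / norm x) \<partial>lborel)"
    by (rule oct_avg[OF assms]) (auto simp: refl3_sgn norm_refl3)
  hence "8 * (\<integral>\<^sup>+x. indicator (cball (0::real^3) 1) x * indicator (oct a b c) x * ennreal (\<bar>x$k\<bar> / norm x) \<partial>lborel) = 8 * ennreal (pi/12)"
    by (simp add: ratio_integral flip: ennreal_numeral ennreal_mult)
  thus ?thesis by (simp add: ennreal_mult_cancel_left)
qed



lemma S2_hbi:
  fixes g :: "real^3 \<Rightarrow> real"
  assumes g[measurable]: "g \<in> borel_measurable borel" and g0: "\<And>x. g x \<ge> 0"
    and I: "(\<integral>\<^sup>+x. indicator (cball (0::real^3) 1) x * ennreal (g (x /\<^sub>R norm x)) \<partial>lborel) = ennreal r"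
    and r: "r \<ge> 0"
  shows "has_bochner_integral S2_measure g (3*r)"
proof -
  let ?\<Omega> = "ball (0::real^3) 1 - {0}"
  have [measurable]: "ball (0::real^3) 1 \<in> sets borel" "{0::real^3} \<in> sets borel" by simp_all
  have [measurable]: "(\<lambda>x::real^3. x /\<^sub>R norm x) \<in> borel_measurable borel" by measurable
  have [measurable]: "(\<lambda>x::real^3. g (x /\<^sub>R norm x)) \<in> borel_measurable borel" by measurable
  have S: "S2_measure = density (distr (restrict_space lborel ?\<Omega>) borel (\<lambda>x. x /\<^sub>R norm x)) (\<lambda>_. ennreal 3)"
    by (simp add: S2_measure_def)
  have pm: "(\<lambda>x::real^3. x /\<^sub>R norm x) \<in> measurable (restrict_space lborel ?\<Omega>) borel"
    by (rule measurable_restrict_space1) measurable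
  have Om: "?\<Omega> \<inter> space lborel \<in> sets lborel" by simp
  have nn: "(\<integral>\<^sup>+x. ennreal (indicator ?\<Omega> x *\<^sub>R (3 *\<^sub>R g (x /\<^sub>R norm x))) \<partial>lborel) = ennreal (3*r)"
  proof -
    have "(\<integral>\<^sup>+x. ennreal (indicator ?\<Omega> x *\<^sub>R (3 *\<^sub>R g (x /\<^sub>R norm x))) \<partial>lborel)
        = (\<integral>\<^sup>+x. 3 * (indicator (cball (0::real^3) 1) x * ennreal (g (x /\<^sub>R norm x))) \<partial>lborel)"
    proof (rule nn_integral_cong_AE)
      show "AE x in lborel. ennreal (indicator ?\<Omega> x *\<^sub>R (3 *\<^sub>R g (x /\<^sub>R norm x))) = 3 * (indicator (cball (0::real^3) 1) x * ennreal (g (x /\<^sub>R norm x)))"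
        using AE_not_sphere AE_nonzero_comps
      proof eventually_elim
        case (elim x)
        hence "x \<noteq> 0" by auto
        hence "x \<in> ?\<Omega> \<longleftrightarrow> x \<in> cball 0 1" using elim(1) by (auto simp: mem_cball_0 mem_ball_0)
        thus ?case using g0 by (auto simp: indicator_def ennreal_mult')
      qed
    qed
    also have "\<dots> = 3 * ennreal r"
      by (subst nn_integral_cmult) (auto simp: I)
    also have "\<dots> = ennreal (3*r)" using r by (simp add: ennreal_mult)
    finally show ?thesis .
  qed
  show ?thesis
    unfolding S
  proof (rule has_bochner_integral_density)
    show "g \<in> borel_measurable (distr (restrict_space lborel ?\<Omega>) borel (\<lambda>x. x /\<^sub>R norm x))" by simp
    show "(\<lambda>_. 3::real) \<in> borel_measurable (distr (restrict_space lborel ?\<Omega>) borel (\<lambda>x. x /\<^sub>R norm x))" by simp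
    show "AE x in distr (restrict_space lborel ?\<Omega>) borel (\<lambda>x. x /\<^sub>R norm x). 0 \<le> (3::real)" by simp
    show "has_bochner_integral (distr (restrict_space lborel ?\<Omega>) borel (\<lambda>x. x /\<^sub>R norm x)) (\<lambda>x. 3 *\<^sub>R g x) (3 * r)"
    proof (rule has_bochner_integral_distr[OF _ pm])
      show "(\<lambda>x. 3 *\<^sub>R g x) \<in> borel_measurable borel" by measurable
      show "has_bochner_integral (restrict_space lborel ?\<Omega>) (\<lambda>x. 3 *\<^sub>R g (x /\<^sub>R norm x)) (3 * r)"
        unfolding has_bochner_integral_restrict_space[OF Om]
        by (rule has_bochner_integral_nn_integral) (use g0 r nn in auto)
    qed
  qed
qed



lemma sgnp_scale: "r > 0 \<Longrightarrow> sgnp (r * y) = sgnp y"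
  by (auto simp: sgnp_def zero_le_mult_iff)

lemma oct_normalize: "(x /\<^sub>R norm x \<in> oct a b c) = (x \<in> oct a b c)"
proof (cases "x = 0")
  case False
  hence "inverse (norm x) > 0" by simp
  thus ?thesis by (simp add: oct_def sgnp_scale)
qed simp

lemma L1: assumes "a \<in> {-1,1}" "b \<in> {-1,1}" "c \<in> {-1,1}"
  shows "has_bochner_integral S2_measure (indicator (oct a b c)) (pi/2)"
proof -
  have "has_bochner_integral S2_measure (indicator (oct a b c)) (3 * (pi/6))"
  proof (rule S2_hbi)
    show "(\<integral>\<^sup>+x. indicator (cball (0::real^3) 1) x * ennreal (indicator (oct a b c) (x /\<^sub>R norm x)) \<partial>lborel) = ennreal (pi/6)"
      unfolding N1[OF assms, symmetric]
      by (intro nn_integral_cong) (simp add: indicator_def oct_normalize)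
  qed auto
  thus ?thesis by simp
qed

lemma L2abs: assumes "a \<in> {-1,1}" "b \<in> {-1,1}" "c \<in> {-1,1}"
  shows "has_bochner_integral S2_measure (\<lambda>l. indicator (oct a b c) l * \<bar>l$k\<bar>) (pi/4)"
proof -
  have "has_bochner_integral S2_measure (\<lambda>l. indicator (oct a b c) l * \<bar>l$k\<bar>) (3 * (pi/12))"
  proof (rule S2_hbi)
    show "(\<integral>\<^sup>+x. indicator (cball (0::real^3) 1) x * ennreal (indicator (oct a b c) (x /\<^sub>R norm x) * \<bar>(x /\<^sub>R norm x)$k\<bar>) \<partial>lborel) = ennreal (pi/12)"
      unfolding N2[OF assms, of k, symmetric]
      by (intro nn_integral_cong) (simp add: indicator_def oct_normalize divide_inverse_commute abs_mult)
  qed auto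
  thus ?thesis by simp
qed

lemma L2: assumes "a \<in> {-1,1}" "b \<in> {-1,1}" "c \<in> {-1,1}"
  shows "has_bochner_integral S2_measure (\<lambda>l. indicator (oct a b c) l * l$k) (vs a b c $ k * (pi/4))"
proof -
  have "has_bochner_integral S2_measure (\<lambda>l. vs a b c $ k * (indicator (oct a b c) l * \<bar>l$k\<bar>)) (vs a b c $ k * (pi/4))"
    using L2abs[OF assms] by (rule has_bochner_integral_mult_right)
  moreover have "vs a b c $ k * (indicator (oct a b c) l * \<bar>l$k\<bar>) = indicator (oct a b c) l * l$k" for l :: "real^3"
  proof (cases "l \<in> oct a b c")
    case True
    hence "vs a b c $ k = sgnp (l$k)"
      using exhaust_3[of k] by (auto simp: oct_def vs_def)
    thus ?thesis using True by (auto simp: sgnp_def)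
  qed simp
  ultimately show ?thesis by simp
qed



definition Mx :: "real \<Rightarrow> real \<Rightarrow> real \<Rightarrow> real \<Rightarrow> complex^2^2" where
  "Mx c0 c1 c2 c3 = c0 *\<^sub>R id2 + c1 *\<^sub>R pauli_x + c2 *\<^sub>R pauli_y + c3 *\<^sub>R pauli_z"

lemma Mx_add: "Mx a0 a1 a2 a3 + Mx b0 b1 b2 b3 = Mx (a0+b0) (a1+b1) (a2+b2) (a3+b3)"
  by (simp add: Mx_def algebra_simps)
lemma Mx_diff: "Mx a0 a1 a2 a3 - Mx b0 b1 b2 b3 = Mx (a0-b0) (a1-b1) (a2-b2) (a3-b3)"
  by (simp add: Mx_def algebra_simps)
lemma Mx_scale: "r *\<^sub>R Mx a0 a1 a2 a3 = Mx (r*a0) (r*a1) (r*a2) (r*a3)"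
  by (simp add: Mx_def algebra_simps)
lemma Mx_cong: "a0 = b0 \<Longrightarrow> a1 = b1 \<Longrightarrow> a2 = b2 \<Longrightarrow> a3 = b3 \<Longrightarrow> Mx a0 a1 a2 a3 = Mx b0 b1 b2 b3"
  by simp
lemma vs_comp [simp]: "vs x y z $ 1 = x" "vs x y z $ 2 = y" "vs x y z $ 3 = z"
  by (simp_all add: vs_def)
lemma G_Mx: "G x y z = Mx (1/8) (x/16) (y/16) (z/16)"
  by (simp add: G_def Mx_def pauli_dot_def algebra_simps)
lemma id2_Mx: "id2 = Mx 1 0 0 0"
  by (simp add: Mx_def)
lemma A_Mx: "A_half p a i = Mx (p i/2) (p i * a i$1/4) (p i * a i$2/4) (p i * a i$3/4)"
  by (simp add: A_half_def Mx_def pauli_dot_def algebra_simps)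
lemma pauli_dot_Mx: "(1/(4*pi)) *\<^sub>R (id2 + pauli_dot l) = Mx (1/(4*pi)) (l$1/(4*pi)) (l$2/(4*pi)) (l$3/(4*pi))"
  by (simp add: Mx_def pauli_dot_def algebra_simps)

lemma sum_signs_Mx: "sum_signs (\<lambda>x y z. Mx (f0 x y z) (f1 x y z) (f2 x y z) (f3 x y z)) = Mx (sum_signs f0) (sum_signs f1) (sum_signs f2) (sum_signs f3)"
  by (simp add: sum_signs_def sum_pm1 Mx_add)

lemma sum_signs_cmult: "sum_signs (\<lambda>x y z. (c::real) * g x y z) = c * sum_signs g"
  by (simp add: sum_signs_def distrib_left)
lemma sum_signs_divide: "sum_signs (\<lambda>x y z. g x y z / (c::real)) = sum_signs g / c"
  by (simp add: sum_signs_def add_divide_distrib)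
lemma sum_signs_add: "sum_signs (\<lambda>x y z. f x y z + g x y z) = sum_signs f + sum_signs g"
  by (simp add: sum_signs_def sum.distrib)
lemma sum_signs_sum: "sum_signs (\<lambda>x y z. \<Sum>i\<in>I. g i x y z) = (\<Sum>i\<in>I. sum_signs (g i))"
  by (simp add: sum_signs_def sum_pm1 sum.distrib)

lemma G_sum: "sum_signs (\<lambda>x y z. X x y z *\<^sub>R G x y z) =
   Mx (sum_signs X / 8) (sum_signs (\<lambda>x y z. X x y z * x) / 16) (sum_signs (\<lambda>x y z. X x y z * y) / 16) (sum_signs (\<lambda>x y z. X x y z * z) / 16)"
  by (simp add: G_Mx Mx_scale sum_signs_Mx) (rule Mx_cong; simp add: sum_signs_def sum_pm1 field_simps)

lemma dot_vs: "u \<bullet> vs x y z = u$1 * x + u$2 * y + u$3 * z"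
  by (simp add: vs_def inner_vec_def sum_3)

lemma Theta_neg: "Theta (-t) = Theta t - t"
  by (simp add: Theta_def)
lemma Theta_nonneg: "Theta t \<ge> 0"
  by (simp add: Theta_def)

lemma dot_flip: "u \<bullet> vs (-1) y z = - (u \<bullet> vs 1 (-y) (-z))"
  by (simp add: dot_vs)

lemma VT:
  "sum_signs (\<lambda>x y z. Theta (u \<bullet> vs x y z) * x) = 4 * u$1"
  "sum_signs (\<lambda>x y z. Theta (u \<bullet> vs x y z) * y) = 4 * u$2"
  "sum_signs (\<lambda>x y z. Theta (u \<bullet> vs x y z) * z) = 4 * u$3"
  by (simp only: sum_signs_def sum_pm1 dot_flip minus_minus; simp add: Theta_neg algebra_simps; simp add: dot_vs)+

lemma four_abs:
  fixes t1 t2 t3 t4 :: real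
  assumes "t1^2 + t2^2 + t3^2 + t4^2 = 4"
  shows "\<bar>t1\<bar> + \<bar>t2\<bar> + \<bar>t3\<bar> + \<bar>t4\<bar> \<le> 4"
proof -
  have p: "2 * \<bar>a\<bar> * \<bar>b\<bar> \<le> a^2 + b^2" for a b :: real
    using sum_squares_bound[of "\<bar>a\<bar>" "\<bar>b\<bar>"] by (simp add: power2_abs)
  have "(\<bar>t1\<bar> + \<bar>t2\<bar> + \<bar>t3\<bar> + \<bar>t4\<bar>)^2 = t1^2 + t2^2 + t3^2 + t4^2
     + (2*\<bar>t1\<bar>*\<bar>t2\<bar> + 2*\<bar>t1\<bar>*\<bar>t3\<bar> + 2*\<bar>t1\<bar>*\<bar>t4\<bar> + 2*\<bar>t2\<bar>*\<bar>t3\<bar> + 2*\<bar>t2\<bar>*\<bar>t4\<bar> + 2*\<bar>t3\<bar>*\<bar>t4\<bar>)"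
    by (simp add: power2_eq_square algebra_simps)
  also have "\<dots> \<le> 16" using assms p[of t1 t2] p[of t1 t3] p[of t1 t4] p[of t2 t3] p[of t2 t4] p[of t3 t4] by linarith
  finally have "(\<bar>t1\<bar> + \<bar>t2\<bar> + \<bar>t3\<bar> + \<bar>t4\<bar>)^2 \<le> 4^2" by simp
  thus ?thesis by (rule power2_le_imp_le) simp
qed

lemma T_le:
  assumes "norm u = 1"
  shows "sum_signs (\<lambda>x y z. Theta (u \<bullet> vs x y z)) \<le> 4"
proof -
  have n: "u$1^2 + u$2^2 + u$3^2 = 1"
    using assms unfolding norm_vec_def L2_set_def by (simp add: sum_3)
  have ab: "2 * Theta t - t = \<bar>t\<bar>" for t by (simp add: Theta_def)
  have "sum_signs (\<lambda>x y z. Theta (u \<bullet> vs x y z)) =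
     (2 * Theta (u \<bullet> vs 1 1 1) - u \<bullet> vs 1 1 1) + (2 * Theta (u \<bullet> vs 1 1 (-1)) - u \<bullet> vs 1 1 (-1))
   + (2 * Theta (u \<bullet> vs 1 (-1) 1) - u \<bullet> vs 1 (-1) 1) + (2 * Theta (u \<bullet> vs 1 (-1) (-1)) - u \<bullet> vs 1 (-1) (-1))"
    by (simp only: sum_signs_def sum_pm1 dot_flip minus_minus; simp add: Theta_neg algebra_simps)
  also have "\<dots> = \<bar>u \<bullet> vs 1 1 1\<bar> + \<bar>u \<bullet> vs 1 1 (-1)\<bar> + \<bar>u \<bullet> vs 1 (-1) 1\<bar> + \<bar>u \<bullet> vs 1 (-1) (-1)\<bar>"
    by (simp only: ab)
  also have "\<dots> \<le> 4"
  proof (rule four_abs)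
    have "(u \<bullet> vs 1 1 1)\<^sup>2 + (u \<bullet> vs 1 1 (- 1))\<^sup>2 + (u \<bullet> vs 1 (- 1) 1)\<^sup>2 + (u \<bullet> vs 1 (- 1) (- 1))\<^sup>2
       = 4 * (u$1^2 + u$2^2 + u$3^2)"
      by (simp add: dot_vs power2_eq_square algebra_simps)
    thus "(u \<bullet> vs 1 1 1)\<^sup>2 + (u \<bullet> vs 1 1 (- 1))\<^sup>2 + (u \<bullet> vs 1 (- 1) 1)\<^sup>2 + (u \<bullet> vs 1 (- 1) (- 1))\<^sup>2 = 4"
      using n by simp
  qed
  finally show ?thesis .
qed

lemma pick_sign:
  fixes F :: "real \<Rightarrow> real \<Rightarrow> real \<Rightarrow> 'b::real_vector"
  shows "sum_signs (\<lambda>x y z. indicator (oct x y z) l *\<^sub>R F x y z) = F (sgnp (l$1)) (sgnp (l$2)) (sgnp (l$3))"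
  by (cases "l$1 \<ge> 0"; cases "l$2 \<ge> 0"; cases "l$3 \<ge> 0") (simp_all add: sum_signs_def oct_def sgnp_def indicator_def)

lemma hbi_sum_signs:
  fixes f :: "real \<Rightarrow> real \<Rightarrow> real \<Rightarrow> 'a \<Rightarrow> 'b::{banach, second_countable_topology}"
  assumes "\<And>x y z. x \<in> {-1,1} \<Longrightarrow> y \<in> {-1,1} \<Longrightarrow> z \<in> {-1,1} \<Longrightarrow> has_bochner_integral M (f x y z) (v x y z)"
  shows "has_bochner_integral M (\<lambda>l. sum_signs (\<lambda>x y z. f x y z l)) (sum_signs v)"
  unfolding sum_signs_def sum_pm1 by (intro has_bochner_integral_add assms) auto

lemma hbi_oct:
  assumes s: "x \<in> {-1,1}" "y \<in> {-1,1}" "z \<in> {-1,1}"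
  shows "has_bochner_integral S2_measure (\<lambda>l. indicator (oct x y z) l *\<^sub>R ((1/(4*pi)) *\<^sub>R (id2 + pauli_dot l))) (G x y z)"
proof -
  have "has_bochner_integral S2_measure
      (\<lambda>l. (indicator (oct x y z) l / (4*pi)) *\<^sub>R id2 + (indicator (oct x y z) l * l$1 / (4*pi)) *\<^sub>R pauli_x
          + (indicator (oct x y z) l * l$2 / (4*pi)) *\<^sub>R pauli_y + (indicator (oct x y z) l * l$3 / (4*pi)) *\<^sub>R pauli_z)
      (((pi/2) / (4*pi)) *\<^sub>R id2 + ((vs x y z $ 1 * (pi/4)) / (4*pi)) *\<^sub>R pauli_x
          + ((vs x y z $ 2 * (pi/4)) / (4*pi)) *\<^sub>R pauli_y + ((vs x y z $ 3 * (pi/4)) / (4*pi)) *\<^sub>R pauli_z)"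
    by (intro has_bochner_integral_add has_bochner_integral_scaleR_left has_bochner_integral_divide_zero L1[OF s] L2[OF s])
  moreover have "G x y z = ((pi/2) / (4*pi)) *\<^sub>R id2 + ((vs x y z $ 1 * (pi/4)) / (4*pi)) *\<^sub>R pauli_x
          + ((vs x y z $ 2 * (pi/4)) / (4*pi)) *\<^sub>R pauli_y + ((vs x y z $ 3 * (pi/4)) / (4*pi)) *\<^sub>R pauli_z"
    by (simp add: G_Mx Mx_def)
  moreover have "indicator (oct x y z) l *\<^sub>R ((1/(4*pi)) *\<^sub>R (id2 + pauli_dot l)) =
      (indicator (oct x y z) l / (4*pi)) *\<^sub>R id2 + (indicator (oct x y z) l * l$1 / (4*pi)) *\<^sub>R pauli_x
          + (indicator (oct x y z) l * l$2 / (4*pi)) *\<^sub>R pauli_y + (indicator (oct x y z) l * l$3 / (4*pi)) *\<^sub>R pauli_z" for l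
    by (simp add: pauli_dot_def algebra_simps)
  ultimately show ?thesis by simp
qed



lemma sum_signs_const: "sum_signs (\<lambda>x y z. (c::real)) = 8 * c"
  by (simp add: sum_signs_def)
lemma sum_signs_coords: "sum_signs (\<lambda>x y z. x) = (0::real)" "sum_signs (\<lambda>x y z. y) = (0::real)" "sum_signs (\<lambda>x y z. z) = (0::real)"
  by (simp_all add: sum_signs_def)
lemma sum_signs_diff: "sum_signs (\<lambda>x y z. f x y z - g x y z) = sum_signs f - (sum_signs g :: real)"
  by (simp add: sum_signs_def sum_subtractf)
lemma sgnp_in: "sgnp t \<in> {-1,1}"
  by (simp add: sgnp_def)
lemma sum_signs_expand: "sum_signs g = g 1 1 1 + g 1 1 (-1) + g 1 (-1) 1 + g 1 (-1) (-1) + g (-1) 1 1 + g (-1) 1 (-1) + g (-1) (-1) 1 + g (-1) (-1) (-1)"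
  by (simp add: sum_signs_def sum_pm1 algebra_simps)

theorem mainTheorem7:
  fixes n :: nat and p :: "nat \<Rightarrow> real" and a :: "nat \<Rightarrow> real^3"
  assumes p_nonneg: "\<And>i. i < n \<Longrightarrow> p i \<ge> 0"
    and a_unit: "\<And>i. i < n \<Longrightarrow> norm (a i) = 1"
    and p_sum: "(\<Sum>i<n. p i) = 2"
    and p_a_sum: "(\<Sum>i<n. p i *\<^sub>R a i) = 0"
    and f_le: "\<And>sx sy sz. sx \<in> {-1,1} \<Longrightarrow> sy \<in> {-1,1} \<Longrightarrow> sz \<in> {-1,1} \<Longrightarrow>
                 f_fun n p a (vs sx sy sz) \<le> 1"
  shows "(\<forall>i<n. alpha p a i \<ge> 0)
    \<and> (\<forall>i<n. \<forall>l\<in>sphere 0 1. pcond n p a i l \<ge> 0)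
    \<and> (\<forall>l\<in>sphere 0 1. (\<Sum>i<n. pcond n p a i l) = 1)
    \<and> (\<forall>i<n. has_bochner_integral S2_measure
           (\<lambda>l. pcond n p a i l *\<^sub>R ((1 / (4 * pi)) *\<^sub>R (id2 + pauli_dot l))) (A_half p a i))
    \<and> (\<forall>i<n. sum_signs (\<lambda>sx sy sz. (p i * Theta (a i \<bullet> vs sx sy sz)) *\<^sub>R G sx sy sz)
           = A_half p a i - alpha p a i *\<^sub>R id2)"
proof -
  define T where "T j = sum_signs (\<lambda>x y z. Theta (a j \<bullet> vs x y z))" for j
  have alpha_T: "alpha p a j = p j / 2 - p j * T j / 8" for j
    by (simp add: alpha_def T_def algebra_simps)
  have T4: "T j \<le> 4" if "j < n" for j
    unfolding T_def using T_le[OF a_unit[OF that]] .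
  have alpha_nn: "alpha p a j \<ge> 0" if "j < n" for j
  proof -
    have "alpha p a j = p j / 2 * (1 - T j / 4)" by (simp add: alpha_T algebra_simps)
    also have "\<dots> \<ge> 0" using p_nonneg[OF that] T4[OF that] by (intro mult_nonneg_nonneg) auto
    finally show ?thesis .
  qed
  define S where "S = (\<Sum>j<n. alpha p a j)"
  have S0: "S \<ge> 0" unfolding S_def by (intro sum_nonneg) (use alpha_nn in auto)
  have sumT: "(\<Sum>j<n. p j * T j) = 8 - 8 * S"
  proof -
    have "S = (\<Sum>j<n. p j) / 2 - (\<Sum>j<n. p j * T j) / 8"
      unfolding S_def alpha_T by (simp add: sum_subtractf sum_divide_distrib)
    thus ?thesis using p_sum by simp
  qed
  have ffun: "f_fun n p a (vs x y z) = (\<Sum>j<n. p j * Theta (a j \<bullet> vs x y z))" for x y z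
    by (simp add: f_fun_def inner_commute)
  have sumf: "sum_signs (\<lambda>x y z. f_fun n p a (vs x y z)) = 8 - 8 * S"
    unfolding ffun sum_signs_sum sum_signs_cmult T_def[symmetric] by (rule sumT)
  have pa: "(\<Sum>j<n. p j * a j $ k) = 0" for k
    using arg_cong[OF p_a_sum, of "\<lambda>v. v $ k"] by simp
  have pa4: "(\<Sum>j<n. p j * (4 * a j $ k)) = 0" for k
  proof -
    have "(\<Sum>j<n. p j * (4 * a j $ k)) = 4 * (\<Sum>j<n. p j * a j $ k)"
      by (simp add: sum_distrib_left algebra_simps)
    thus ?thesis using pa[of k] by simp
  qed
  have sumfx: "sum_signs (\<lambda>x y z. f_fun n p a (vs x y z) * x) = 0"
     "sum_signs (\<lambda>x y z. f_fun n p a (vs x y z) * y) = 0"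
     "sum_signs (\<lambda>x y z. f_fun n p a (vs x y z) * z) = 0"
    unfolding ffun sum_distrib_right sum_signs_sum mult.assoc sum_signs_cmult VT
    using pa4[of 1] pa4[of 2] pa4[of 3] by simp_all
  have fle: "f_fun n p a (vs x y z) \<le> 1" if "x \<in> {-1,1}" "y \<in> {-1,1}" "z \<in> {-1,1}" for x y z
    using f_le that by auto
  have fone: "f_fun n p a (vs x y z) = 1" if "S = 0" "x \<in> {-1,1}" "y \<in> {-1,1}" "z \<in> {-1,1}" for x y z
  proof -
    have e: "sum_signs (\<lambda>x y z. f_fun n p a (vs x y z)) = 8" using sumf that by simp
    note b = fle[of 1 1 1] fle[of 1 1 "-1"] fle[of 1 "-1" 1] fle[of 1 "-1" "-1"]
       fle[of "-1" 1 1] fle[of "-1" 1 "-1"] fle[of "-1" "-1" 1] fle[of "-1" "-1" "-1"]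
    show ?thesis using e b that(2-4) unfolding sum_signs_expand by auto
  qed
  define P where "P j v = p j * Theta (a j \<bullet> v) + (if S = 0 then 0 else (1 - f_fun n p a v) * alpha p a j / S)" for j v
  have pc: "pcond n p a j l = P j (sgnvec l)" for j l
    by (simp add: pcond_def Let_def P_def S_def)
  have sv: "sgnvec l = vs (sgnp (l$1)) (sgnp (l$2)) (sgnp (l$3))" for l
    by (simp add: sgnvec_def)
  have Pnn: "P j (vs x y z) \<ge> 0" if "j < n" "x \<in> {-1,1}" "y \<in> {-1,1}" "z \<in> {-1,1}" for j x y z
    unfolding P_def using p_nonneg[OF that(1)] Theta_nonneg[of "a j \<bullet> vs x y z"] fle[OF that(2-4)] alpha_nn[OF that(1)] S0
    by (auto intro!: add_nonneg_nonneg mult_nonneg_nonneg divide_nonneg_nonneg)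
  have Psum: "(\<Sum>j<n. P j (vs x y z)) = 1" if "x \<in> {-1,1}" "y \<in> {-1,1}" "z \<in> {-1,1}" for x y z
  proof (cases "S = 0")
    case True
    thus ?thesis using fone[OF True that] by (simp add: P_def ffun)
  next
    case False
    have "(\<Sum>j<n. P j (vs x y z)) = f_fun n p a (vs x y z) + (1 - f_fun n p a (vs x y z)) * S / S"
      using False by (simp add: P_def ffun sum.distrib S_def sum_divide_distrib[symmetric] sum_distrib_left[symmetric])
    thus ?thesis using False by simp
  qed
  have part5: "sum_signs (\<lambda>sx sy sz. (p j * Theta (a j \<bullet> vs sx sy sz)) *\<^sub>R G sx sy sz) = A_half p a j - alpha p a j *\<^sub>R id2" for j
    unfolding G_sum A_Mx id2_Mx Mx_scale Mx_diff mult.assoc sum_signs_cmult VT T_def[symmetric] alpha_T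
    by (rule Mx_cong) (simp_all add: algebra_simps)
  have part4: "has_bochner_integral S2_measure
           (\<lambda>l. pcond n p a i l *\<^sub>R ((1 / (4 * pi)) *\<^sub>R (id2 + pauli_dot l))) (A_half p a i)" if "i < n" for i
  proof -
    let ?K = "\<lambda>l. (1 / (4 * pi)) *\<^sub>R (id2 + pauli_dot l)"
    have fn_eq: "pcond n p a i l *\<^sub>R ?K l = sum_signs (\<lambda>x y z. P i (vs x y z) *\<^sub>R (indicator (oct x y z) l *\<^sub>R ?K l))" for l
    proof -
      have "sum_signs (\<lambda>x y z. P i (vs x y z) *\<^sub>R (indicator (oct x y z) l *\<^sub>R ?K l))
          = sum_signs (\<lambda>x y z. indicator (oct x y z) l *\<^sub>R (P i (vs x y z) *\<^sub>R ?K l))"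
        by (simp only: scaleR_left_commute)
      also have "\<dots> = P i (sgnvec l) *\<^sub>R ?K l" by (simp only: pick_sign sv)
      finally show ?thesis by (simp add: pc)
    qed
    have hb: "has_bochner_integral S2_measure (\<lambda>l. sum_signs (\<lambda>x y z. P i (vs x y z) *\<^sub>R (indicator (oct x y z) l *\<^sub>R ?K l)))
          (sum_signs (\<lambda>x y z. P i (vs x y z) *\<^sub>R G x y z))"
      by (intro hbi_sum_signs has_bochner_integral_scaleR_right hbi_oct) auto
    have val: "sum_signs (\<lambda>x y z. P i (vs x y z) *\<^sub>R G x y z) = A_half p a i"
    proof (cases "S = 0")
      case True
      have "alpha p a i = 0"
        using True alpha_nn that unfolding S_def by (subst (asm) sum_nonneg_eq_0_iff) auto
      thus ?thesis using True part5[of i] by (simp add: P_def)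
    next
      case False
      have "sum_signs (\<lambda>x y z. P i (vs x y z) *\<^sub>R G x y z)
          = sum_signs (\<lambda>x y z. (p i * Theta (a i \<bullet> vs x y z)) *\<^sub>R G x y z)
            + sum_signs (\<lambda>x y z. (alpha p a i / S * (1 - f_fun n p a (vs x y z))) *\<^sub>R G x y z)"
        using False by (simp add: P_def scaleR_add_left sum_signs_add mult_ac)
      also have "sum_signs (\<lambda>x y z. (alpha p a i / S * (1 - f_fun n p a (vs x y z))) *\<^sub>R G x y z) = alpha p a i *\<^sub>R id2"
        unfolding G_sum id2_Mx Mx_scale mult.assoc sum_signs_cmult right_diff_distrib left_diff_distrib mult_1_left mult_1_right
          sum_signs_diff sum_signs_const sum_signs_coords sumf sumfx
        using False by (intro Mx_cong) (simp_all add: field_simps)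
      finally show ?thesis using part5[of i] by simp
    qed
    show ?thesis using hb unfolding fn_eq[symmetric] val .
  qed
  show ?thesis
  proof (intro conjI allI impI ballI)
    show "alpha p a i \<ge> 0" if "i < n" for i using alpha_nn that .
    show "pcond n p a i l \<ge> 0" if "i < n" "l \<in> sphere 0 1" for i l
      unfolding pc sv using Pnn[OF that(1) sgnp_in sgnp_in sgnp_in] .
    show "(\<Sum>i<n. pcond n p a i l) = 1" for l
      unfolding pc sv using Psum[OF sgnp_in sgnp_in sgnp_in] .
    show "has_bochner_integral S2_measure (\<lambda>l. pcond n p a i l *\<^sub>R ((1 / (4 * pi)) *\<^sub>R (id2 + pauli_dot l))) (A_half p a i)"
      if "i < n" for i using part4[OF that] .
    show "sum_signs (\<lambda>sx sy sz. (p i * Theta (a i \<bullet> vs sx sy sz)) *\<^sub>R G sx sy sz) = A_half p a i - alpha p a i *\<^sub>R id2" for i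
      by (rule part5)
  qed
qed

end
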